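(* For every prime $p$, every $q=p^e$ ($e\ge1$) and every $m\ge2$, we have $\mathrm{Code}_p(\mathrm{AG}_1(m,q))=\mathrm{Code}_p(\mathcal{T}_A(m,q))$ (as subspaces of $\mathbb{F}_p^{X}$, $X=\mathbb{A}^m(\mathbb{F}_q)$).
   Context: $\mathrm{AG}_1(m,q)$ is the block design whose points are the points of $\mathbb{A}^m(\mathbb{F}_q)$ and whose blocks are all affine lines of $\mathbb{A}^m(\mathbb{F}_q)$. $\mathcal{T}_A(m,q)$ is the design with the same point set, obtained by fixing $q$ pairwise parallel hyperplanes $H_1,\dots,H_q$ partitioning $\mathbb{A}^m(\mathbb{F}_q)$ (the groups) and taking as blocks all affine lines not contained in any $H_j$. For a block design $(X,\mathcal{B})$ and prime power $r$, $\mathrm{Code}_r$ of the design is the $\mathbb{F}_r$-linear code $\{c\in\mathbb{F}_r^X:\ \sum_{x\in B}c_x=0\ \forall B\in\mathcal{B}\}$. *)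

theory Defs
  imports Main "HOL-Computational_Algebra.Primes" "HOL-Library.Cardinality"
begin

text \<open>Points of the affine space A^m(F_q) are functions 'n \<Rightarrow> 'a with 'n a finite
  index type of cardinality m and 'a a finite field with q elements.\<close>

definition affine_lines :: "('n::finite \<Rightarrow> 'a::field) set set" where
  "affine_lines = {range (\<lambda>t. (\<lambda>i. a i + t * d i)) | a d. \<exists>i. d i \<noteq> 0}"

definition AG1_blocks :: "('n::finite \<Rightarrow> 'a::field) set set" where
  "AG1_blocks = affine_lines"

text \<open>The q pairwise parallel hyperplanes partitioning the space are the level sets
  H_b = {x. c . x = b}, b in F_q, of a nonzero linear functional given by c.\<close>
definition parallel_hyperplane :: "('n::finite \<Rightarrow> 'a::field) \<Rightarrow> 'a \<Rightarrow> ('n \<Rightarrow> 'a) set" where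
  "parallel_hyperplane c b = {x. (\<Sum>i\<in>UNIV. c i * x i) = b}"

definition TA_blocks :: "('n::finite \<Rightarrow> 'a::field) \<Rightarrow> ('n \<Rightarrow> 'a) set set" where
  "TA_blocks c = {L \<in> affine_lines. \<forall>b. \<not> L \<subseteq> parallel_hyperplane c b}"

definition design_code :: "'x set set \<Rightarrow> ('x \<Rightarrow> 'b::field) set" where
  "design_code B = {w. \<forall>L\<in>B. (\<Sum>x\<in>L. w x) = 0}"

end

theory Submission
  imports Defs
begin

lemma card_char_zero: "(of_nat CARD('b::{field,finite}) :: 'b) = 0"
proof -
  have b: "bij (\<lambda>x::'b. x + 1)"
    by (rule bij_betw_byWitness[where f'="\<lambda>x. x - 1"]) auto
  have "(\<Sum>x\<in>(UNIV::'b set). x + 1) = (\<Sum>x\<in>UNIV. x)"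
    using sum.reindex_bij_betw[OF b, of "\<lambda>x. x"] by simp
  then show ?thesis by (simp add: sum.distrib)
qed

lemma bij_mult: "(t::'a::field) \<noteq> 0 \<Longrightarrow> bij (\<lambda>x. t * x)"
  by (rule bij_betw_byWitness[where f'="\<lambda>x. x / t"]) auto

lemma bij_add: "bij (\<lambda>x::'a::ab_group_add. k + x)"
  by (rule bij_betw_byWitness[where f'="\<lambda>x. x - k"]) auto

lemma line_sum:
  fixes a d :: "'n::finite \<Rightarrow> 'a::{field,finite}" and w :: "('n \<Rightarrow> 'a) \<Rightarrow> 'b::comm_monoid_add"
  assumes "d i \<noteq> 0"
  shows "(\<Sum>x\<in>range (\<lambda>t. (\<lambda>i. a i + t * d i)). w x) = (\<Sum>t\<in>UNIV. w (\<lambda>i. a i + t * d i))"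
proof -
  have "inj (\<lambda>t. (\<lambda>i. a i + t * d i))"
  proof (rule injI)
    fix s t assume "(\<lambda>i. a i + s * d i) = (\<lambda>i. a i + t * d i)"
    then have "a i + s * d i = a i + t * d i" by meson
    then show "s = t" using assms by simp
  qed
  then show ?thesis by (simp add: sum.reindex)
qed

lemma ta_line:
  fixes a v c :: "'n::finite \<Rightarrow> 'a::{field,finite}"
  assumes "(\<Sum>i\<in>UNIV. c i * v i) \<noteq> 0"
  shows "range (\<lambda>t. (\<lambda>i. a i + t * v i)) \<in> TA_blocks c"
proof -
  obtain j where j: "v j \<noteq> 0" using assms by force
  have "range (\<lambda>t. (\<lambda>i. a i + t * v i)) \<in> affine_lines"
    unfolding affine_lines_def using j by blast
  moreover have "\<not> range (\<lambda>t. (\<lambda>i. a i + t * v i)) \<subseteq> parallel_hyperplane c b" for b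
  proof
    assume h: "range (\<lambda>t. (\<lambda>i. a i + t * v i)) \<subseteq> parallel_hyperplane c b"
    have "(\<Sum>i\<in>UNIV. c i * (a i + 0 * v i)) = b" using h unfolding parallel_hyperplane_def by blast
    moreover have "(\<Sum>i\<in>UNIV. c i * (a i + 1 * v i)) = b" using h unfolding parallel_hyperplane_def by blast
    ultimately show False using assms by (simp add: distrib_left sum.distrib)
  qed
  ultimately show ?thesis unfolding TA_blocks_def by blast
qed

theorem mainTheorem5:
  fixes c :: "'n::finite \<Rightarrow> 'a::{field,finite}" and p e :: nat
  assumes "prime p" and "e \<ge> 1" and "CARD('a) = p ^ e"
    and "CARD('b::{field,finite}) = p"
    and "CARD('n) \<ge> 2" and "\<exists>i. c i \<noteq> 0"
  shows "(design_code (AG1_blocks :: ('n \<Rightarrow> 'a) set set) :: (('n \<Rightarrow> 'a) \<Rightarrow> 'b) set)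
         = design_code (TA_blocks c)"
proof
  show "design_code AG1_blocks \<subseteq> design_code (TA_blocks c)"
    unfolding design_code_def AG1_blocks_def TA_blocks_def by blast
next
  have q0: "(of_nat CARD('a) :: 'b) = 0"
  proof -
    obtain e' where "e = Suc e'" using assms(2) by (cases e) auto
    then show ?thesis using assms(3,4) card_char_zero[where 'b='b] by (simp add: of_nat_power)
  qed
  obtain i0 where i0: "c i0 \<noteq> 0" using assms(6) by blast
  define u :: "'n \<Rightarrow> 'a" where "u = (\<lambda>i. if i = i0 then 1 else 0)"
  have cu: "(\<Sum>i\<in>UNIV. c i * u i) \<noteq> 0"
  proof -
    have "(\<Sum>i\<in>UNIV. c i * u i) = (\<Sum>i\<in>UNIV. if i = i0 then c i else 0)"
      unfolding u_def by (rule sum.cong) auto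
    then show ?thesis using i0 by (simp add: sum.delta)
  qed
  show "design_code (TA_blocks c) \<subseteq> (design_code AG1_blocks :: (('n \<Rightarrow> 'a) \<Rightarrow> 'b) set)"
  proof
    fix w :: "('n \<Rightarrow> 'a) \<Rightarrow> 'b"
    assume w: "w \<in> design_code (TA_blocks c)"
    have wTA: "(\<Sum>x\<in>L. w x) = 0" if "L \<in> TA_blocks c" for L
      using w that unfolding design_code_def by blast
    have taS: "(\<Sum>t\<in>UNIV. w (\<lambda>i. a i + t * v i)) = 0" if hv: "(\<Sum>i\<in>UNIV. c i * v i) \<noteq> 0" for a v
    proof -
      obtain j where "v j \<noteq> 0" using hv by force
      from line_sum[where d=v and i=j and a=a and w=w, OF this] wTA[OF ta_line[OF hv, of a]] show ?thesis by simp
    qed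
    show "w \<in> design_code AG1_blocks"
      unfolding design_code_def AG1_blocks_def mem_Collect_eq
    proof (rule ballI)
      fix L :: "('n \<Rightarrow> 'a) set" assume L: "L \<in> affine_lines"
      then obtain a d j where Ld: "L = range (\<lambda>t. (\<lambda>i. a i + t * d i))" and dj: "d j \<noteq> 0"
        unfolding affine_lines_def by blast
      show "(\<Sum>x\<in>L. w x) = 0"
      proof (cases "L \<in> TA_blocks c")
        case True then show ?thesis by (rule wTA)
      next
        case False
        then obtain b where Lb: "L \<subseteq> parallel_hyperplane c b"
          using L unfolding TA_blocks_def by blast
        have "(\<Sum>i\<in>UNIV. c i * (a i + 0 * d i)) = b" using Lb Ld unfolding parallel_hyperplane_def by blast
        moreover have "(\<Sum>i\<in>UNIV. c i * (a i + 1 * d i)) = b" using Lb Ld unfolding parallel_hyperplane_def by blast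
        ultimately have cd: "(\<Sum>i\<in>UNIV. c i * d i) = 0" by (simp add: distrib_left sum.distrib)
        define S where "S s = (\<Sum>t\<in>UNIV. w (\<lambda>i. a i + s * u i + t * d i))" for s
        define T where "T = (\<Sum>s\<in>UNIV. S s)"
        have ST: "S k = T" for k
        proof -
          define g where "g t = (\<Sum>l\<in>UNIV. w (\<lambda>i. a i + (k + t) * u i + (t * l) * d i))" for t
          have g: "g t = S (k + t) - (if t = 0 then S k else 0)" for t
          proof (cases "t = 0")
            case True
            then show ?thesis using q0 by (simp add: g_def)
          next
            case False
            have "g t = (\<Sum>l\<in>UNIV. (\<lambda>l. w (\<lambda>i. a i + (k + t) * u i + l * d i)) (t * l))"
              by (simp add: g_def)
            also have "\<dots> = S (k + t)" unfolding S_def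
              by (rule sum.reindex_bij_betw[OF bij_mult[OF False]])
            finally show ?thesis using False by simp
          qed
          have "(\<Sum>t\<in>UNIV. g t) = (\<Sum>l\<in>UNIV. \<Sum>t\<in>UNIV. w (\<lambda>i. (a i + k * u i) + t * (u i + l * d i)))"
          proof -
            have e: "(\<lambda>i. a i + (k + t) * u i + (t * l) * d i) = (\<lambda>i. (a i + k * u i) + t * (u i + l * d i))" for t l
              by (rule ext) (simp add: algebra_simps)
            show ?thesis unfolding g_def e by (rule sum.swap)
          qed
          also have "\<dots> = (\<Sum>l\<in>(UNIV::'a set). 0)"
          proof (rule sum.cong[OF refl])
            fix l
            have cv: "(\<Sum>i\<in>UNIV. c i * (u i + l * d i)) \<noteq> 0"
            proof -
              have "(\<Sum>i\<in>UNIV. c i * (u i + l * d i)) = (\<Sum>i\<in>UNIV. c i * u i) + l * (\<Sum>i\<in>UNIV. c i * d i)"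
                by (simp add: distrib_left sum.distrib sum_distrib_left mult.left_commute)
              then show ?thesis using cu cd by simp
            qed
            show "(\<Sum>t\<in>UNIV. w (\<lambda>i. (a i + k * u i) + t * (u i + l * d i))) = 0"
              using taS[OF cv] .
          qed
          also have "\<dots> = 0" by simp
          finally have g0: "(\<Sum>t\<in>UNIV. g t) = 0" .
          have "(\<Sum>t\<in>UNIV. g t) = (\<Sum>t\<in>UNIV. S (k + t)) - (\<Sum>t\<in>(UNIV::'a set). (if t = 0 then S k else 0))"
            unfolding g by (rule sum_subtractf)
          also have "(\<Sum>t\<in>UNIV. S (k + t)) = T" unfolding T_def
            by (rule sum.reindex_bij_betw[OF bij_add])
          also have "(\<Sum>t\<in>(UNIV::'a set). (if t = 0 then S k else 0)) = S k" by simp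
          finally show "S k = T" using g0 by simp
        qed
        have "T = (\<Sum>s\<in>(UNIV::'a set). S s)" by (rule T_def)
        also have "\<dots> = (\<Sum>s\<in>(UNIV::'a set). T)" by (rule sum.cong[OF refl]) (rule ST)
        also have "\<dots> = of_nat CARD('a) * T" by simp
        finally have T0: "T = 0" using q0 by simp
        have "(\<Sum>x\<in>L. w x) = S 0" unfolding Ld S_def using line_sum[where d=d and i=j and a=a and w=w, OF dj] by simp
        then show ?thesis using ST T0 by simp
      qed
    qed
  qed
qed

end
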